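(* Let $n\ge j\ge1$ be integers, and let $\lambda=(\lambda_1,\lambda_2,\lambda_3)\in\mathbb Z^3$ with $\lambda_1\ge\lambda_2\ge\lambda_3$ and $\max\{\lambda_1-\lambda_2,\lambda_2-\lambda_3\}\le n-j$. Then the number of $(ZK,K_n)$-double cosets contained in $ZK\lambda(\varpi)K$ is at most $q^{4n-4j}(1+1/q)^3$.
   Context: $F$ is a $p$-adic field with $p\ne2,3$, ring of integers $R$, uniformizer $\varpi$, residue field of order $q$. $G=GL_3(F)$, $K=GL_3(R)$, $Z$ is the center of $G$, $K_n$ is the subgroup of $K$ of elements congruent to the identity mod $\varpi^n$, and $\lambda(\varpi)=\operatorname{diag}(\varpi^{\lambda_1},\varpi^{\lambda_2},\varpi^{\lambda_3})$. *)

theory Defs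
  imports "HOL-Analysis.Analysis" "HOL-Library.Numeral_Type"
begin

text \<open>A normalized discrete valuation v on a field 'a (v is only meaningful on nonzero
  elements; v 0 is irrelevant).  The valuation ring is R, and
  "in_ideal v n x" means x \<in> \<varpi>^n R.\<close>

definition in_ideal :: "('a::field \<Rightarrow> int) \<Rightarrow> int \<Rightarrow> 'a \<Rightarrow> bool" where
  "in_ideal v n x \<longleftrightarrow> x = 0 \<or> v x \<ge> n"

definition val_ring :: "('a::field \<Rightarrow> int) \<Rightarrow> 'a set" where
  "val_ring v = {x. in_ideal v 0 x}"

definition residue_field :: "('a::field \<Rightarrow> int) \<Rightarrow> 'a set set" where
  "residue_field v = val_ring v // {(x, y). x \<in> val_ring v \<and> y \<in> val_ring v \<and> in_ideal v 1 (x - y)}"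

definition residue_card :: "('a::field \<Rightarrow> int) \<Rightarrow> nat" where
  "residue_card v = card (residue_field v)"

definition residue_char :: "('a::field \<Rightarrow> int) \<Rightarrow> nat" where
  "residue_char v = (THE p. prime p \<and> in_ideal v 1 (of_nat p))"

text \<open>A p-adic field: a field of characteristic 0, complete with respect to a normalized
  discrete valuation with finite residue field (i.e. a finite extension of Q_p).\<close>
definition padic_field :: "('a::field \<Rightarrow> int) \<Rightarrow> bool" where
  "padic_field v \<longleftrightarrow>
     (\<forall>x y. x \<noteq> 0 \<and> y \<noteq> 0 \<longrightarrow> v (x * y) = v x + v y) \<and>
     (\<forall>x y. x \<noteq> 0 \<and> y \<noteq> 0 \<and> x + y \<noteq> 0 \<longrightarrow> v (x + y) \<ge> min (v x) (v y)) \<and>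
     (\<exists>x. x \<noteq> 0 \<and> v x = 1) \<and>
     inj (of_nat :: nat \<Rightarrow> 'a) \<and>
     finite (residue_field v) \<and>
     (\<forall>s :: nat \<Rightarrow> 'a.
        (\<forall>N. \<exists>M. \<forall>m\<ge>M. \<forall>k\<ge>M. in_ideal v N (s m - s k)) \<longrightarrow>
        (\<exists>L. \<forall>N. \<exists>M. \<forall>m\<ge>M. in_ideal v N (s m - L)))"

type_synonym 'a mat3 = "'a ^ 3 ^ 3"

definition GL3 :: "'a::field mat3 set" where
  "GL3 = {g. invertible g}"

definition integral_mat :: "('a::field \<Rightarrow> int) \<Rightarrow> 'a mat3 \<Rightarrow> bool" where
  "integral_mat v g \<longleftrightarrow> (\<forall>i j. g $ i $ j \<in> val_ring v)"

definition Kgrp :: "('a::field \<Rightarrow> int) \<Rightarrow> 'a mat3 set" where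
  "Kgrp v = {g. \<exists>h. g ** h = mat 1 \<and> h ** g = mat 1 \<and> integral_mat v g \<and> integral_mat v h}"

definition Kn :: "('a::field \<Rightarrow> int) \<Rightarrow> nat \<Rightarrow> 'a mat3 set" where
  "Kn v n = {g \<in> Kgrp v. \<forall>i j. in_ideal v (int n) (g $ i $ j - (mat 1 :: 'a mat3) $ i $ j)}"

definition Zgrp :: "'a::field mat3 set" where
  "Zgrp = {mat c | c. c \<noteq> 0}"

definition lam_mat :: "'a::field \<Rightarrow> int \<Rightarrow> int \<Rightarrow> int \<Rightarrow> 'a mat3" where
  "lam_mat w l1 l2 l3 = (\<chi> i j. if i = j then
       (if i = 1 then w powi l1 else if i = 2 then w powi l2 else w powi l3) else 0)"

definition ZK_K :: "('a::field \<Rightarrow> int) \<Rightarrow> 'a mat3 \<Rightarrow> 'a mat3 set" where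
  "ZK_K v g = {z ** k ** g ** k' | z k k'. z \<in> Zgrp \<and> k \<in> Kgrp v \<and> k' \<in> Kgrp v}"

definition ZK_Kn :: "('a::field \<Rightarrow> int) \<Rightarrow> nat \<Rightarrow> 'a mat3 \<Rightarrow> 'a mat3 set" where
  "ZK_Kn v n g = {z ** k ** g ** k' | z k k'. z \<in> Zgrp \<and> k \<in> Kgrp v \<and> k' \<in> Kn v n}"

definition dcosets_in :: "('a::field \<Rightarrow> int) \<Rightarrow> nat \<Rightarrow> 'a mat3 set \<Rightarrow> 'a mat3 set set" where
  "dcosets_in v n S = {D. \<exists>g \<in> GL3. D = ZK_Kn v n g \<and> D \<subseteq> S}"

end

theory Submission
  imports Defs
begin

primrec repset :: "'a::field \<Rightarrow> 'a set \<Rightarrow> nat \<Rightarrow> 'a set" where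
  "repset w S 0 = {0}"
| "repset w S (Suc m) = (\<lambda>(s, t). s + w * t) ` (S \<times> repset w S m)"

lemma repset_finite: "finite S \<Longrightarrow> finite (repset w S m)"
  by (induction m) auto

lemma repset_card: "finite S \<Longrightarrow> card (repset w S m) \<le> card S ^ m"
proof (induction m)
  case 0 then show ?case by simp
next
  case (Suc m)
  have "card (repset w S (Suc m)) \<le> card (S \<times> repset w S m)"
    unfolding repset.simps by (rule card_image_le) (simp add: Suc.prems repset_finite)
  also have "\<dots> = card S * card (repset w S m)" by (simp add: card_cartesian_product)
  also have "\<dots> \<le> card S * card S ^ m" using Suc by simp
  finally show ?case by simp
qed

definition M3 :: "'a::zero \<Rightarrow> 'a \<Rightarrow> 'a \<Rightarrow> 'a \<Rightarrow> 'a \<Rightarrow> 'a \<Rightarrow> 'a \<Rightarrow> 'a \<Rightarrow> 'a \<Rightarrow> 'a^3^3" where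
  "M3 a b c d e f g h k = vector [vector [a, b, c], vector [d, e, f], vector [g, h, k]]"

lemma M3_nth [simp]:
  "M3 a b c d e f g h k $ 1 $ 1 = a" "M3 a b c d e f g h k $ 1 $ 2 = b" "M3 a b c d e f g h k $ 1 $ 3 = c"
  "M3 a b c d e f g h k $ 2 $ 1 = d" "M3 a b c d e f g h k $ 2 $ 2 = e" "M3 a b c d e f g h k $ 2 $ 3 = f"
  "M3 a b c d e f g h k $ 3 $ 1 = g" "M3 a b c d e f g h k $ 3 $ 2 = h" "M3 a b c d e f g h k $ 3 $ 3 = k"
  by (simp_all add: M3_def)

lemma mult_nth: "((A::'a::comm_ring_1^3^3) ** B) $ i $ j = A$i$1 * B$1$j + A$i$2 * B$2$j + A$i$3 * B$3$j"
  by (simp add: matrix_matrix_mult_def sum_3)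

lemma mat3_eq: "(A::'a^3^3) = B \<longleftrightarrow>
  A$1$1 = B$1$1 \<and> A$1$2 = B$1$2 \<and> A$1$3 = B$1$3 \<and>
  A$2$1 = B$2$1 \<and> A$2$2 = B$2$2 \<and> A$2$3 = B$2$3 \<and>
  A$3$1 = B$3$1 \<and> A$3$2 = B$3$2 \<and> A$3$3 = B$3$3"
  by (simp add: vec_eq_iff forall_3)

lemma mat1_nth [simp]:
  "(mat 1 :: 'a::{zero,one}^3^3) $ 1 $ 1 = 1" "(mat 1 :: 'a^3^3) $ 1 $ 2 = 0" "(mat 1 :: 'a^3^3) $ 1 $ 3 = 0"
  "(mat 1 :: 'a^3^3) $ 2 $ 1 = 0" "(mat 1 :: 'a^3^3) $ 2 $ 2 = 1" "(mat 1 :: 'a^3^3) $ 2 $ 3 = 0"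
  "(mat 1 :: 'a^3^3) $ 3 $ 1 = 0" "(mat 1 :: 'a^3^3) $ 3 $ 2 = 0" "(mat 1 :: 'a^3^3) $ 3 $ 3 = 1"
  by (simp_all add: mat_def)

lemma mat_nth3 [simp]:
  "(mat c :: 'a::{zero}^3^3) $ 1 $ 1 = c" "(mat c :: 'a^3^3) $ 1 $ 2 = 0" "(mat c :: 'a^3^3) $ 1 $ 3 = 0"
  "(mat c :: 'a^3^3) $ 2 $ 1 = 0" "(mat c :: 'a^3^3) $ 2 $ 2 = c" "(mat c :: 'a^3^3) $ 2 $ 3 = 0"
  "(mat c :: 'a^3^3) $ 3 $ 1 = 0" "(mat c :: 'a^3^3) $ 3 $ 2 = 0" "(mat c :: 'a^3^3) $ 3 $ 3 = c"
  by (simp_all add: mat_def)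

lemma mat_mult_mat: "(mat c :: 'a::comm_ring_1^3^3) ** mat d = mat (c * d)"
  unfolding mat3_eq mult_nth by simp

lemma mat_comm: "(mat c :: 'a::comm_ring_1^3^3) ** (A::'a^3^3) = A ** mat c"
  unfolding mat3_eq mult_nth by (simp add: mult.commute)

locale dvr =
  fixes v :: "'a::field \<Rightarrow> int" and w :: 'a
  assumes vmul: "x \<noteq> 0 \<Longrightarrow> y \<noteq> 0 \<Longrightarrow> v (x * y) = v x + v y"
    and vadd: "x \<noteq> 0 \<Longrightarrow> y \<noteq> 0 \<Longrightarrow> x + y \<noteq> 0 \<Longrightarrow> v (x + y) \<ge> min (v x) (v y)"
    and wnz: "w \<noteq> 0" and vw: "v w = 1"
begin

abbreviation I :: "int \<Rightarrow> 'a \<Rightarrow> bool" where "I n x \<equiv> in_ideal v n x"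

lemma v1: "v 1 = 0"
  using vmul[of 1 1] by simp

lemma vinv: "x \<noteq> 0 \<Longrightarrow> v (inverse x) = - v x"
  using vmul[of x "inverse x"] v1 by simp

lemma vm1: "v (-1) = 0"
  using vmul[of "-1" "-1"] v1 by simp

lemma vminus: "x \<noteq> 0 \<Longrightarrow> v (- x) = v x"
  using vmul[of "-1" x] vm1 by simp

lemma vdiv: "x \<noteq> 0 \<Longrightarrow> y \<noteq> 0 \<Longrightarrow> v (x / y) = v x - v y"
  using vmul[of x "inverse y"] vinv[of y] by (simp add: divide_inverse)

lemma vpow: "v (w ^ n) = int n"
  by (induction n) (simp_all add: v1 vmul wnz vw)

lemma vpowi: "v (w powi k) = k"
proof (cases "k \<ge> 0")
  case True
  then show ?thesis using vpow[of "nat k"] by (simp add: power_int_def)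
next
  case False
  then show ?thesis using vpow[of "nat (-k)"] vinv[of "w ^ nat (-k)"] wnz
    by (simp add: power_int_def power_inverse)
qed

lemma I_0 [simp]: "I n 0" by (simp add: in_ideal_def)

lemma I_add: "I n x \<Longrightarrow> I n y \<Longrightarrow> I n (x + y)"
  unfolding in_ideal_def
  by (metis add.right_neutral add_0 min.bounded_iff order.trans vadd)

lemma I_minus: "I n x \<Longrightarrow> I n (- x)"
  unfolding in_ideal_def by (cases "x = 0") (auto simp: vminus)

lemma I_minus_iff [simp]: "I n (- x) = I n x"
  using I_minus[of n x] I_minus[of n "-x"] by auto

lemma I_diff: "I n x \<Longrightarrow> I n y \<Longrightarrow> I n (x - y)"
  using I_add[of n x "-y"] by simp

lemma I_mult: "I a x \<Longrightarrow> I b y \<Longrightarrow> I (a + b) (x * y)"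
  unfolding in_ideal_def by (cases "x = 0 \<or> y = 0") (auto simp: vmul)

lemma I_mono: "I a x \<Longrightarrow> b \<le> a \<Longrightarrow> I b x"
  unfolding in_ideal_def by auto

lemma I_mult_R: "I a x \<Longrightarrow> I 0 y \<Longrightarrow> I a (x * y)"
  using I_mult[of a x 0 y] by simp

lemma I_mult_L: "I 0 x \<Longrightarrow> I a y \<Longrightarrow> I a (x * y)"
  using I_mult[of 0 x a y] by simp

lemma I_1: "I 0 1" by (simp add: in_ideal_def v1)

lemma I_w: "I 1 w" by (simp add: in_ideal_def vw)

lemma I0w: "I 0 w" by (simp add: in_ideal_def vw)

lemma I_wpow: "I (int n) (w ^ n)" by (simp add: in_ideal_def vpow)

lemma I_powi: "I k (w powi k)" by (simp add: in_ideal_def vpowi)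

lemma unit_iff: "I 0 x \<Longrightarrow> \<not> I 1 x \<Longrightarrow> x \<noteq> 0 \<and> v x = 0"
  unfolding in_ideal_def by auto

lemma div_unit: "I e a \<Longrightarrow> b \<noteq> 0 \<Longrightarrow> v b = e \<Longrightarrow> I 0 (a / b)"
  unfolding in_ideal_def by (cases "a = 0") (auto simp: vdiv)


lemma residue_reps:
  assumes "finite (residue_field v)"
  shows "\<exists>S. finite S \<and> card S \<le> residue_card v \<and> (\<forall>s\<in>S. I 0 s) \<and>
     (\<forall>x. I 0 x \<longrightarrow> (\<exists>s\<in>S. I 1 (x - s)))"
proof -
  let ?r = "{(x, y). x \<in> val_ring v \<and> y \<in> val_ring v \<and> in_ideal v 1 (x - y)}"
  define S where "S = (\<lambda>C. SOME x. x \<in> C) ` residue_field v"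
  have fin: "finite S" using assms by (simp add: S_def)
  have card: "card S \<le> residue_card v"
    unfolding S_def residue_card_def by (rule card_image_le[OF assms])
  have cover: "\<exists>s\<in>S. I 0 s \<and> I 1 (x - s)" if "I 0 x" for x
  proof -
    let ?C = "?r `` {x}"
    have C: "?C \<in> residue_field v"
      unfolding residue_field_def by (rule quotientI) (use that in \<open>simp add: val_ring_def\<close>)
    define y0 where "y0 = (SOME y. y \<in> ?C)"
    have "x \<in> ?C" using that by (simp add: val_ring_def)
    then have "y0 \<in> ?C" unfolding y0_def by (rule someI)
    then have "(x, y0) \<in> ?r" by (rule ImageE) simp
    then have "I 0 y0 \<and> I 1 (x - y0)" by (simp add: val_ring_def)
    moreover have "y0 \<in> S" unfolding S_def y0_def using C by blast
    ultimately show ?thesis by blast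
  qed
  have "\<forall>s\<in>S. I 0 s"
  proof
    fix s assume "s \<in> S"
    then obtain C where C: "C \<in> residue_field v" and s: "s = (SOME x. x \<in> C)"
      unfolding S_def by blast
    from C obtain x where x: "x \<in> val_ring v" and Cx: "C = ?r `` {x}"
      unfolding residue_field_def quotient_def by blast
    have "x \<in> C" using x Cx by (simp add: val_ring_def)
    then have "s \<in> C" unfolding s by (rule someI)
    then show "I 0 s" using Cx by (simp add: val_ring_def)
  qed
  then show ?thesis using fin card cover by blast
qed

lemma repset_R: "\<forall>s\<in>S. I 0 s \<Longrightarrow> t \<in> repset w S m \<Longrightarrow> I 0 t"
proof (induction m arbitrary: t)
  case 0 then show ?case by simp
next
  case (Suc m)
  then obtain s t' where "s \<in> S" "t' \<in> repset w S m" "t = s + w * t'" by auto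
  then show ?case using Suc I_add I_mult_L I_mono[OF I_w] by (metis zero_le_one)
qed

lemma repset_cover:
  assumes "\<forall>x. I 0 x \<longrightarrow> (\<exists>s\<in>S. I 1 (x - s))"
  shows "I 0 x \<Longrightarrow> \<exists>t\<in>repset w S m. I (int m) (x - t)"
proof (induction m arbitrary: x)
  case 0 then show ?case by simp
next
  case (Suc m)
  obtain s where s: "s \<in> S" "I 1 (x - s)" using assms Suc.prems by blast
  define x' where "x' = (x - s) / w"
  have x': "I 0 x'" unfolding x'_def using div_unit[OF s(2) wnz vw] .
  obtain t where t: "t \<in> repset w S m" "I (int m) (x' - t)" using Suc.IH[OF x'] by blast
  have eq: "x - (s + w * t) = w * (x' - t)" unfolding x'_def using wnz by (simp add: field_simps)
  have "I (1 + int m) (w * (x' - t))" by (rule I_mult[OF I_w t(2)])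
  then have "I (int (Suc m)) (x - (s + w * t))" using eq by (simp add: add.commute)
  moreover have "s + w * t \<in> repset w S (Suc m)" using s t by auto
  ultimately show ?case by blast
qed

lemma cong_choice:
  assumes cov: "\<forall>x. I 0 x \<longrightarrow> (\<exists>s\<in>S. I 1 (x - s))"
    and a: "I e a" and b: "b \<noteq> 0" "v b = e"
  shows "\<exists>s\<in>repset w S M. I (e + int M) (a - s * b)"
proof -
  have c: "I 0 (a / b)" using div_unit[OF a b] .
  obtain s where s: "s \<in> repset w S M" "I (int M) (a / b - s)"
    using repset_cover[OF cov c] by blast
  have "a - s * b = b * (a / b - s)" using b by (simp add: field_simps)
  moreover have "I e b" using b by (simp add: in_ideal_def)
  ultimately have "I (e + int M) (a - s * b)" using I_mult[OF _ s(2)] by metis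
  then show ?thesis using s(1) by blast
qed

lemma integral_iff: "integral_mat v g \<longleftrightarrow>
  I 0 (g$1$1) \<and> I 0 (g$1$2) \<and> I 0 (g$1$3) \<and>
  I 0 (g$2$1) \<and> I 0 (g$2$2) \<and> I 0 (g$2$3) \<and>
  I 0 (g$3$1) \<and> I 0 (g$3$2) \<and> I 0 (g$3$3)"
  unfolding integral_mat_def val_ring_def by (simp add: forall_3)

lemma I3a: "I 1 a \<Longrightarrow> I 0 b \<Longrightarrow> I 0 c \<Longrightarrow> I 1 (a * b * c)"
  using I_mult_R by blast
lemma I3b: "I 0 a \<Longrightarrow> I 1 b \<Longrightarrow> I 0 c \<Longrightarrow> I 1 (a * b * c)"
  using I_mult_R I_mult_L by blast
lemma I3c: "I 0 a \<Longrightarrow> I 0 b \<Longrightarrow> I 1 c \<Longrightarrow> I 1 (a * b * c)"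
  using I_mult_R I_mult_L by metis
lemma I30: "I 0 a \<Longrightarrow> I 0 b \<Longrightarrow> I 0 c \<Longrightarrow> I 0 (a * b * c)"
  using I_mult_R by blast
lemma I20: "I 0 a \<Longrightarrow> I 0 b \<Longrightarrow> I 0 (a * b)"
  using I_mult_R by blast

lemma det_integral: "integral_mat v g \<Longrightarrow> I 0 (det g)"
  unfolding integral_iff det_3 by (intro I_add I_diff I30; simp)

lemma mult_integral: "integral_mat v A \<Longrightarrow> integral_mat v B \<Longrightarrow> integral_mat v (A ** B)"
  unfolding integral_iff mult_nth by (intro conjI I_add I20; simp)

lemma Kgrp_integral: "g \<in> Kgrp v \<Longrightarrow> integral_mat v g"
  unfolding Kgrp_def by blast

lemma Kgrp_det: "g \<in> Kgrp v \<Longrightarrow> \<not> I 1 (det g)"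
proof
  assume g: "g \<in> Kgrp v" and d: "I 1 (det g)"
  then obtain h where h: "g ** h = mat 1" "integral_mat v h" unfolding Kgrp_def by blast
  have "det g * det h = 1" using h(1) by (metis det_mul det_I)
  moreover have "I 1 (det g * det h)" using I_mult_R[OF d det_integral[OF h(2)]] .
  ultimately show False using v1 by (simp add: in_ideal_def)
qed

lemma Kgrp_mult: "g \<in> Kgrp v \<Longrightarrow> h \<in> Kgrp v \<Longrightarrow> g ** h \<in> Kgrp v"
proof -
  assume "g \<in> Kgrp v" "h \<in> Kgrp v"
  then obtain g' h' where g: "g ** g' = mat 1" "g' ** g = mat 1" "integral_mat v g" "integral_mat v g'"
    and h: "h ** h' = mat 1" "h' ** h = mat 1" "integral_mat v h" "integral_mat v h'"
    unfolding Kgrp_def by blast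
  have "(g ** h) ** (h' ** g') = mat 1"
    by (metis g(1) h(1) matrix_mul_assoc matrix_mul_rid)
  moreover have "(h' ** g') ** (g ** h) = mat 1"
    by (metis g(2) h(2) matrix_mul_assoc matrix_mul_rid)
  ultimately show ?thesis unfolding Kgrp_def using g h mult_integral by blast
qed

lemma Kgrp_one: "mat 1 \<in> Kgrp v"
  unfolding Kgrp_def integral_iff by (auto simp: I_1)

lemma Kgrp_inv: "g \<in> Kgrp v \<Longrightarrow> \<exists>g'\<in>Kgrp v. g ** g' = mat 1 \<and> g' ** g = mat 1"
  unfolding Kgrp_def by blast

definition adj3 :: "'a^3^3 \<Rightarrow> 'a^3^3" where
  "adj3 g = M3
    (g$2$2 * g$3$3 - g$2$3 * g$3$2) (g$1$3 * g$3$2 - g$1$2 * g$3$3) (g$1$2 * g$2$3 - g$1$3 * g$2$2)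
    (g$2$3 * g$3$1 - g$2$1 * g$3$3) (g$1$1 * g$3$3 - g$1$3 * g$3$1) (g$1$3 * g$2$1 - g$1$1 * g$2$3)
    (g$2$1 * g$3$2 - g$2$2 * g$3$1) (g$1$2 * g$3$1 - g$1$1 * g$3$2) (g$1$1 * g$2$2 - g$1$2 * g$2$1)"

lemma adj3_right: "g ** adj3 g = mat (det g)"
  unfolding mat3_eq mult_nth adj3_def det_3 by (simp add: algebra_simps)

lemma adj3_left: "adj3 g ** g = mat (det g)"
  unfolding mat3_eq mult_nth adj3_def det_3 by (simp add: algebra_simps)

lemma Kgrp_of_det:
  assumes g: "integral_mat v g" and d: "\<not> I 1 (det g)"
  shows "g \<in> Kgrp v"
proof -
  have dn: "det g \<noteq> 0" "v (det g) = 0" using unit_iff[OF det_integral[OF g] d] by auto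
  define h where "h = adj3 g ** mat (inverse (det g))"
  have "g ** h = mat 1" unfolding h_def
    by (simp add: matrix_mul_assoc adj3_right mat_mult_mat dn(1))
  moreover have "h ** g = mat 1" unfolding h_def
    by (metis adj3_left mat_comm mat_mult_mat matrix_mul_assoc dn(1) right_inverse)
  moreover have "integral_mat v h"
  proof -
    have inv: "I 0 (inverse (det g))" using dn by (simp add: in_ideal_def vinv)
    have "integral_mat v (adj3 g)" using g unfolding integral_iff adj3_def
      by (simp add: I_diff I20)
    then show ?thesis using inv unfolding integral_iff h_def mult_nth by (simp add: I20)
  qed
  ultimately show ?thesis unfolding Kgrp_def using g by blast
qed


lemma not_I1_one: "\<not> I 1 1" "\<not> I 1 (-1)"
  by (simp_all add: in_ideal_def v1 vm1)

lemma unit_mult_w: "b \<noteq> 0 \<Longrightarrow> v b = 0 \<Longrightarrow> w * b \<noteq> 0" "b \<noteq> 0 \<Longrightarrow> v b = 0 \<Longrightarrow> v (w * b) = 1"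
  using vmul[of w b] wnz vw by simp_all

lemma unit_mult_wpow: "b \<noteq> 0 \<Longrightarrow> v b = 0 \<Longrightarrow> w ^ N * b \<noteq> 0" "b \<noteq> 0 \<Longrightarrow> v b = 0 \<Longrightarrow> v (w ^ N * b) = int N"
  using vmul[of "w ^ N" b] wnz vpow by simp_all

end

locale dvr_reps = dvr +
  fixes S :: "'a set"
  assumes Sfin: "finite S" and SR: "\<forall>s\<in>S. I 0 s"
    and cov: "\<forall>x. I 0 x \<longrightarrow> (\<exists>s\<in>S. I 1 (x - s))"
begin

abbreviation RS :: "nat \<Rightarrow> 'a set" where "RS M \<equiv> repset w S M"

lemma RS_R: "t \<in> RS M \<Longrightarrow> I 0 t"
  using repset_R[OF SR] .

lemma choose: "I e a \<Longrightarrow> b \<noteq> 0 \<Longrightarrow> v b = e \<Longrightarrow> \<exists>s\<in>RS M. I (e + int M) (a - s * b)"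
  using cong_choice[OF cov] .

definition T1 :: "nat \<Rightarrow> ('a^3^3) set" where
  "T1 N = (\<lambda>(x, y). M3 1 0 0 0 1 0 x y 1) ` (RS N \<times> RS N)
    \<union> (\<lambda>(x, y). M3 1 0 0 0 0 1 x 1 (w * y)) ` (RS N \<times> RS (N - 1))
    \<union> (\<lambda>(x, y). M3 0 1 0 0 0 1 1 (w * x) (w * y)) ` (RS (N - 1) \<times> RS (N - 1))"

lemma stepA:
  assumes N: "N \<ge> 1" and k: "k \<in> Kgrp v"
  shows "\<exists>t\<in>T1 N. \<exists>m\<in>Kgrp v. I (int N) (m$3$1) \<and> I (int N) (m$3$2) \<and> k = m ** t"
proof -
  have ki: "I 0 (k$1$1)" "I 0 (k$1$2)" "I 0 (k$1$3)" "I 0 (k$2$1)" "I 0 (k$2$2)" "I 0 (k$2$3)"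
     "I 0 (k$3$1)" "I 0 (k$3$2)" "I 0 (k$3$3)"
    using Kgrp_integral[OF k] unfolding integral_iff by auto
  have kd: "\<not> I 1 (det k)" using Kgrp_det[OF k] .
  have NN: "1 + int (N - 1) = int N" using N by simp
  show ?thesis
  proof (cases "I 1 (k$3$3)")
    case False
    then have u: "k$3$3 \<noteq> 0" "v (k$3$3) = 0" using unit_iff ki by auto
    obtain x where x: "x \<in> RS N" "I (int N) (k$3$1 - x * k$3$3)"
      using choose[OF ki(7) u] by auto
    obtain y where y: "y \<in> RS N" "I (int N) (k$3$2 - y * k$3$3)"
      using choose[OF ki(8) u] by auto
    define s where "s = M3 1 0 0 0 1 0 (-x) (-y) (1::'a)"
    define t where "t = M3 1 0 0 0 1 0 x y (1::'a)"
    have sK: "s \<in> Kgrp v"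
      by (rule Kgrp_of_det) (use RS_R[OF x(1)] RS_R[OF y(1)] in \<open>simp_all add: s_def integral_iff I_1 det_3 not_I1_one\<close>)
    have st: "s ** t = mat 1" unfolding s_def t_def mat3_eq mult_nth by simp
    define m where "m = k ** s"
    have "k = m ** t" unfolding m_def by (metis st matrix_mul_assoc matrix_mul_rid)
    moreover have "m \<in> Kgrp v" unfolding m_def using Kgrp_mult[OF k sK] .
    moreover have "I (int N) (m$3$1)" "I (int N) (m$3$2)"
      using x(2) y(2) unfolding m_def s_def mult_nth by (simp_all add: algebra_simps)
    moreover have "t \<in> T1 N" unfolding T1_def t_def by (rule UnI1, rule UnI1, rule image_eqI[where x="(x,y)"]) (use x(1) y(1) in auto)
    ultimately show ?thesis by blast
  next
    case k33: True
    show ?thesis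
    proof (cases "I 1 (k$3$2)")
      case False
      then have u: "k$3$2 \<noteq> 0" "v (k$3$2) = 0" using unit_iff ki by auto
      obtain x where x: "x \<in> RS N" "I (int N) (k$3$1 - x * k$3$2)"
        using choose[OF ki(7) u] by auto
      obtain y where y: "y \<in> RS (N - 1)" "I (int N) (k$3$3 - y * (w * k$3$2))"
        using choose[where M="N - 1", OF k33 unit_mult_w[OF u(1) u(2)]] by (simp only: NN) blast
      define s where "s = M3 1 0 0 (-x) (-(w*y)) 1 0 1 (0::'a)"
      define t where "t = M3 1 0 0 0 0 1 x 1 (w * y)"
      have sK: "s \<in> Kgrp v"
        by (rule Kgrp_of_det) (use RS_R[OF x(1)] RS_R[OF y(1)] I0w in \<open>simp_all add: s_def integral_iff I_1 det_3 not_I1_one I20\<close>)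
      have st: "s ** t = mat 1" unfolding s_def t_def mat3_eq mult_nth by simp
      define m where "m = k ** s"
      have "k = m ** t" unfolding m_def by (metis st matrix_mul_assoc matrix_mul_rid)
      moreover have "m \<in> Kgrp v" unfolding m_def using Kgrp_mult[OF k sK] .
      moreover have "I (int N) (m$3$1)" "I (int N) (m$3$2)"
        using x(2) y(2) unfolding m_def s_def mult_nth by (simp_all add: algebra_simps)
      moreover have "t \<in> T1 N" unfolding T1_def t_def by (rule UnI1, rule UnI2, rule image_eqI[where x="(x,y)"]) (use x(1) y(1) in auto)
      ultimately show ?thesis by blast
    next
      case k32: True
      have "\<not> I 1 (k$3$1)"
      proof
        assume k31: "I 1 (k$3$1)"
        have "I 1 (det k)" unfolding det_3
          using ki k31 k32 k33 by (intro I_add I_diff; blast intro: I3a I3b I3c)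
        then show False using kd by blast
      qed
      then have u: "k$3$1 \<noteq> 0" "v (k$3$1) = 0" using unit_iff ki by auto
      obtain x where x: "x \<in> RS (N - 1)" "I (int N) (k$3$2 - x * (w * k$3$1))"
        using choose[where M="N - 1", OF k32 unit_mult_w[OF u(1) u(2)]] by (simp only: NN) blast
      obtain y where y: "y \<in> RS (N - 1)" "I (int N) (k$3$3 - y * (w * k$3$1))"
        using choose[where M="N - 1", OF k33 unit_mult_w[OF u(1) u(2)]] by (simp only: NN) blast
      define s where "s = M3 (-(w*x)) (-(w*y)) 1 1 0 0 0 1 (0::'a)"
      define t where "t = M3 0 1 0 0 0 1 1 (w * x) (w * y)"
      have sK: "s \<in> Kgrp v"
        by (rule Kgrp_of_det) (use RS_R[OF x(1)] RS_R[OF y(1)] I0w in \<open>simp_all add: s_def integral_iff I_1 det_3 not_I1_one I20\<close>)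
      have st: "s ** t = mat 1" unfolding s_def t_def mat3_eq mult_nth by simp
      define m where "m = k ** s"
      have "k = m ** t" unfolding m_def by (metis st matrix_mul_assoc matrix_mul_rid)
      moreover have "m \<in> Kgrp v" unfolding m_def using Kgrp_mult[OF k sK] .
      moreover have "I (int N) (m$3$1)" "I (int N) (m$3$2)"
        using x(2) y(2) unfolding m_def s_def mult_nth by (simp_all add: algebra_simps)
      moreover have "t \<in> T1 N" unfolding T1_def t_def by (rule UnI2, rule image_eqI[where x="(x,y)"]) (use x(1) y(1) in auto)
      ultimately show ?thesis by blast
    qed
  qed
qed


definition T2 :: "nat \<Rightarrow> ('a^3^3) set" where
  "T2 N = (\<lambda>x. M3 1 0 0 x 1 0 0 0 1) ` RS N \<union> (\<lambda>y. M3 0 1 0 1 (w * y) 0 0 0 1) ` RS (N - 1)"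

definition T3 :: "nat \<Rightarrow> ('a^3^3) set" where
  "T3 N = (\<lambda>x. M3 1 0 0 0 1 0 (w ^ N * x) 0 1) ` RS N"

lemma stepB:
  assumes N: "N \<ge> 1" and k: "k \<in> Kgrp v" and k31: "I (int N) (k$3$1)" and k32: "I (int N) (k$3$2)"
  shows "\<exists>t\<in>T2 N. \<exists>m\<in>Kgrp v. I (int N) (m$2$1) \<and> I (int N) (m$3$1) \<and> I (int N) (m$3$2) \<and> k = m ** t"
proof -
  have ki: "I 0 (k$1$1)" "I 0 (k$1$2)" "I 0 (k$1$3)" "I 0 (k$2$1)" "I 0 (k$2$2)" "I 0 (k$2$3)"
     "I 0 (k$3$1)" "I 0 (k$3$2)" "I 0 (k$3$3)"
    using Kgrp_integral[OF k] unfolding integral_iff by auto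
  have kd: "\<not> I 1 (det k)" using Kgrp_det[OF k] .
  have NN: "1 + int (N - 1) = int N" using N by simp
  have k31': "I 1 (k$3$1)" "I 1 (k$3$2)" using k31 k32 N I_mono by auto
  show ?thesis
  proof (cases "I 1 (k$2$2)")
    case False
    then have u: "k$2$2 \<noteq> 0" "v (k$2$2) = 0" using unit_iff ki by auto
    obtain x where x: "x \<in> RS N" "I (int N) (k$2$1 - x * k$2$2)"
      using choose[OF ki(4) u] by auto
    define s where "s = M3 1 0 0 (-x) 1 0 0 0 (1::'a)"
    define t where "t = M3 1 0 0 x 1 0 0 0 (1::'a)"
    have sK: "s \<in> Kgrp v"
      by (rule Kgrp_of_det) (use RS_R[OF x(1)] in \<open>simp_all add: s_def integral_iff I_1 det_3 not_I1_one\<close>)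
    have st: "s ** t = mat 1" unfolding s_def t_def mat3_eq mult_nth by simp
    define m where "m = k ** s"
    have "k = m ** t" unfolding m_def by (metis st matrix_mul_assoc matrix_mul_rid)
    moreover have "m \<in> Kgrp v" unfolding m_def using Kgrp_mult[OF k sK] .
    moreover have "I (int N) (m$2$1)" using x(2) unfolding m_def s_def mult_nth by (simp add: algebra_simps)
    moreover have "I (int N) (m$3$1)"
    proof -
      have "m$3$1 = k$3$1 - k$3$2 * x" unfolding m_def s_def mult_nth by simp
      then show ?thesis using k31 k32 I_diff I_mult_R RS_R[OF x(1)] by metis
    qed
    moreover have "I (int N) (m$3$2)" using k32 unfolding m_def s_def mult_nth by simp
    moreover have "t \<in> T2 N" unfolding T2_def t_def by (rule UnI1, rule image_eqI[where x=x]) (use x(1) in auto)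
    ultimately show ?thesis by blast
  next
    case k22: True
    have "\<not> I 1 (k$2$1)"
    proof
      assume k21: "I 1 (k$2$1)"
      have "I 1 (det k)" unfolding det_3
        using ki k31' k21 k22 by (intro I_add I_diff; blast intro: I3a I3b I3c)
      then show False using kd by blast
    qed
    then have u: "k$2$1 \<noteq> 0" "v (k$2$1) = 0" using unit_iff ki by auto
    obtain y where y: "y \<in> RS (N - 1)" "I (int N) (k$2$2 - y * (w * k$2$1))"
      using choose[where M="N - 1", OF k22 unit_mult_w[OF u(1) u(2)]] by (simp only: NN) blast
    define s where "s = M3 (-(w*y)) 1 0 1 0 0 0 0 (1::'a)"
    define t where "t = M3 0 1 0 1 (w * y) 0 0 0 (1::'a)"
    have sK: "s \<in> Kgrp v"
      by (rule Kgrp_of_det) (use RS_R[OF y(1)] I0w in \<open>simp_all add: s_def integral_iff I_1 det_3 not_I1_one I20\<close>)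
    have st: "s ** t = mat 1" unfolding s_def t_def mat3_eq mult_nth by simp
    define m where "m = k ** s"
    have "k = m ** t" unfolding m_def by (metis st matrix_mul_assoc matrix_mul_rid)
    moreover have "m \<in> Kgrp v" unfolding m_def using Kgrp_mult[OF k sK] .
    moreover have "I (int N) (m$2$1)" using y(2) unfolding m_def s_def mult_nth by (simp add: algebra_simps)
    moreover have "I (int N) (m$3$1)"
    proof -
      have "m$3$1 = k$3$2 - k$3$1 * (w * y)" unfolding m_def s_def mult_nth by simp
      moreover have "I 0 (w * y)" using I20[OF I0w RS_R[OF y(1)]] .
      ultimately show ?thesis using k31 k32 I_diff I_mult_R by metis
    qed
    moreover have "I (int N) (m$3$2)" using k31 unfolding m_def s_def mult_nth by simp
    moreover have "t \<in> T2 N" unfolding T2_def t_def by (rule UnI2, rule image_eqI[where x=y]) (use y(1) in auto)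
    ultimately show ?thesis by blast
  qed
qed

lemma stepC:
  assumes N: "N \<ge> 1" and k: "k \<in> Kgrp v" and k21: "I (int N) (k$2$1)"
    and k31: "I (int N) (k$3$1)" and k32: "I (int N) (k$3$2)"
  shows "\<exists>t\<in>T3 N. \<exists>m\<in>Kgrp v. I (int N) (m$2$1) \<and> I (2 * int N) (m$3$1) \<and> I (int N) (m$3$2) \<and> k = m ** t"
proof -
  have ki: "I 0 (k$1$1)" "I 0 (k$1$2)" "I 0 (k$1$3)" "I 0 (k$2$1)" "I 0 (k$2$2)" "I 0 (k$2$3)"
     "I 0 (k$3$1)" "I 0 (k$3$2)" "I 0 (k$3$3)"
    using Kgrp_integral[OF k] unfolding integral_iff by auto
  have kd: "\<not> I 1 (det k)" using Kgrp_det[OF k] .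
  have k1: "I 1 (k$2$1)" "I 1 (k$3$1)" "I 1 (k$3$2)" using k21 k31 k32 N I_mono by auto
  have "\<not> I 1 (k$3$3)"
  proof
    assume k33: "I 1 (k$3$3)"
    have "I 1 (det k)" unfolding det_3
      using ki k1 k33 by (intro I_add I_diff; blast intro: I3a I3b I3c)
    then show False using kd by blast
  qed
  then have u: "k$3$3 \<noteq> 0" "v (k$3$3) = 0" using unit_iff ki by auto
  obtain x where x: "x \<in> RS N" "I (int N + int N) (k$3$1 - x * (w ^ N * k$3$3))"
    using choose[OF k31 unit_mult_wpow[OF u(1) u(2)]] by blast
  define s where "s = M3 1 0 0 0 1 0 (- (w ^ N * x)) 0 (1::'a)"
  define t where "t = M3 1 0 0 0 1 0 (w ^ N * x) 0 (1::'a)"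
  have wx: "I 0 (w ^ N * x)" using I20[OF I_mono[OF I_wpow] RS_R[OF x(1)]] by simp
  have wx': "I (int N) (w ^ N * x)" using I_mult_R[OF I_wpow RS_R[OF x(1)]] .
  have sK: "s \<in> Kgrp v"
    by (rule Kgrp_of_det) (use wx in \<open>simp_all add: s_def integral_iff I_1 det_3 not_I1_one\<close>)
  have st: "s ** t = mat 1" unfolding s_def t_def mat3_eq mult_nth by simp
  define m where "m = k ** s"
  have "k = m ** t" unfolding m_def by (metis st matrix_mul_assoc matrix_mul_rid)
  moreover have "m \<in> Kgrp v" unfolding m_def using Kgrp_mult[OF k sK] .
  moreover have "I (int N) (m$2$1)"
  proof -
    have "m$2$1 = k$2$1 - k$2$3 * (w ^ N * x)" unfolding m_def s_def mult_nth by simp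
    then show ?thesis using k21 I_diff I_mult_L[OF ki(6) wx'] by metis
  qed
  moreover have "I (2 * int N) (m$3$1)" using x(2) unfolding m_def s_def mult_nth
    by (simp add: algebra_simps mult_2)
  moreover have "I (int N) (m$3$2)" using k32 unfolding m_def s_def mult_nth by simp
  moreover have "t \<in> T3 N" unfolding T3_def t_def using x(1) by blast
  ultimately show ?thesis by blast
qed


definition TT :: "nat \<Rightarrow> ('a^3^3) set" where
  "TT N = (\<lambda>(a, b, c). a ** b ** c) ` (T3 N \<times> T2 N \<times> T1 N)"

lemma decomp:
  assumes N: "N \<ge> 1" and k: "k \<in> Kgrp v"
  shows "\<exists>t\<in>TT N. \<exists>h\<in>Kgrp v. I (int N) (h$2$1) \<and> I (2 * int N) (h$3$1) \<and> I (int N) (h$3$2) \<and> k = h ** t"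
proof -
  obtain t1 m1 where t1: "t1 \<in> T1 N" "m1 \<in> Kgrp v" "I (int N) (m1$3$1)" "I (int N) (m1$3$2)" "k = m1 ** t1"
    using stepA[OF N k] by blast
  obtain t2 m2 where t2: "t2 \<in> T2 N" "m2 \<in> Kgrp v" "I (int N) (m2$2$1)" "I (int N) (m2$3$1)" "I (int N) (m2$3$2)" "m1 = m2 ** t2"
    using stepB[OF N t1(2) t1(3) t1(4)] by blast
  obtain t3 h where t3: "t3 \<in> T3 N" "h \<in> Kgrp v" "I (int N) (h$2$1)" "I (2 * int N) (h$3$1)" "I (int N) (h$3$2)" "m2 = h ** t3"
    using stepC[OF N t2(2) t2(3) t2(4) t2(5)] by blast
  have "k = h ** (t3 ** t2 ** t1)" using t1(5) t2(6) t3(6) by (simp add: matrix_mul_assoc)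
  moreover have "t3 ** t2 ** t1 \<in> TT N" unfolding TT_def using t1(1) t2(1) t3(1)
    by (intro image_eqI[where x="(t3, t2, t1)"]) auto
  ultimately show ?thesis using t3 by blast
qed

lemma RS_card: "card (RS M) \<le> card S ^ M" using repset_card[OF Sfin] .
lemma RS_fin: "finite (RS M)" using repset_finite[OF Sfin] .

lemma card_img2: "card ((\<lambda>(x, y). f x y) ` (RS a \<times> RS b)) \<le> card S ^ a * card S ^ b"
proof -
  have "card ((\<lambda>(x, y). f x y) ` (RS a \<times> RS b)) \<le> card (RS a \<times> RS b)"
    by (rule card_image_le) (simp add: RS_fin)
  also have "\<dots> = card (RS a) * card (RS b)" by (simp add: card_cartesian_product)
  also have "\<dots> \<le> card S ^ a * card S ^ b" by (intro mult_mono RS_card) auto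
  finally show ?thesis .
qed

lemma card_img1: "card (f ` RS a) \<le> card S ^ a"
  using card_image_le[OF RS_fin, of f a] RS_card[of a] by linarith

lemma T1_fin: "finite (T1 N)" unfolding T1_def by (simp add: RS_fin)
lemma T2_fin: "finite (T2 N)" unfolding T2_def by (simp add: RS_fin)
lemma T3_fin: "finite (T3 N)" unfolding T3_def by (simp add: RS_fin)
lemma TT_fin: "finite (TT N)" unfolding TT_def by (simp add: T1_fin T2_fin T3_fin)

lemma T1_card: "card (T1 N) \<le> card S ^ N * card S ^ N + card S ^ N * card S ^ (N - 1) + card S ^ (N - 1) * card S ^ (N - 1)"
proof -
  have "card (T1 N) \<le> card ((\<lambda>(x, y). M3 1 0 0 0 1 0 x y 1) ` (RS N \<times> RS N)
    \<union> (\<lambda>(x, y). M3 1 0 0 0 0 1 x 1 (w * y)) ` (RS N \<times> RS (N - 1)))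
    + card ((\<lambda>(x, y). M3 0 1 0 0 0 1 1 (w * x) (w * y)) ` (RS (N - 1) \<times> RS (N - 1)))"
    unfolding T1_def by (rule card_Un_le)
  also have "\<dots> \<le> card ((\<lambda>(x, y). M3 1 0 0 0 1 0 x y 1) ` (RS N \<times> RS N))
    + card ((\<lambda>(x, y). M3 1 0 0 0 0 1 x 1 (w * y)) ` (RS N \<times> RS (N - 1)))
    + card ((\<lambda>(x, y). M3 0 1 0 0 0 1 1 (w * x) (w * y)) ` (RS (N - 1) \<times> RS (N - 1)))"
    using card_Un_le by simp
  also have "\<dots> \<le> card S ^ N * card S ^ N + card S ^ N * card S ^ (N - 1) + card S ^ (N - 1) * card S ^ (N - 1)"
    by (intro add_mono card_img2)
  finally show ?thesis .
qed

lemma T2_card: "card (T2 N) \<le> card S ^ N + card S ^ (N - 1)"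
proof -
  have "card (T2 N) \<le> card ((\<lambda>x. M3 1 0 0 x 1 0 0 0 1) ` RS N) + card ((\<lambda>y. M3 0 1 0 1 (w * y) 0 0 0 1) ` RS (N - 1))"
    unfolding T2_def by (rule card_Un_le)
  also have "\<dots> \<le> card S ^ N + card S ^ (N - 1)" by (intro add_mono card_img1)
  finally show ?thesis .
qed

lemma T3_card: "card (T3 N) \<le> card S ^ N"
  unfolding T3_def by (rule card_img1)

lemma TT_card: "card (TT N) \<le> card (T3 N) * card (T2 N) * card (T1 N)"
proof -
  have "card (TT N) \<le> card (T3 N \<times> T2 N \<times> T1 N)"
    unfolding TT_def by (rule card_image_le) (simp add: T1_fin T2_fin T3_fin)
  then show ?thesis by (simp add: card_cartesian_product)
qed

lemma TT_card_real:
  assumes N: "N \<ge> 1" and Q: "real (card S) \<le> Q"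
  shows "real (card (TT N)) \<le> Q ^ (4 * N) * (1 + 1 / Q) ^ 3"
proof -
  let ?q = "real (card S)"
  have Q0: "Q \<ge> 0" using Q by linarith
  have Qp: "Q > 0"
  proof -
    have "card S > 0"
    proof -
      obtain s where "s \<in> S" using cov I_0 by blast
      then show ?thesis using Sfin card_gt_0_iff by blast
    qed
    then show ?thesis using Q by linarith
  qed
  define a where "a = Q ^ (N - 1)"
  have a0: "a \<ge> 0" unfolding a_def using Q0 by simp
  have QN: "Q ^ N = Q * a" unfolding a_def using N by (metis Suc_diff_le diff_Suc_1 power_Suc)
  have c1: "real (card (T1 N)) \<le> (Q * a) * (Q * a) + (Q * a) * a + a * a"
  proof -
    have "real (card (T1 N)) \<le> ?q ^ N * ?q ^ N + ?q ^ N * ?q ^ (N - 1) + ?q ^ (N - 1) * ?q ^ (N - 1)"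
      using T1_card[of N] by (metis of_nat_le_iff of_nat_add of_nat_mult of_nat_power)
    also have "\<dots> \<le> Q ^ N * Q ^ N + Q ^ N * Q ^ (N - 1) + Q ^ (N - 1) * Q ^ (N - 1)"
      by (intro add_mono mult_mono power_mono Q) (auto simp: Q0)
    finally show ?thesis unfolding QN a_def .
  qed
  have c2: "real (card (T2 N)) \<le> Q * a + a"
  proof -
    have "real (card (T2 N)) \<le> ?q ^ N + ?q ^ (N - 1)"
      using T2_card[of N] by (metis of_nat_le_iff of_nat_add of_nat_power)
    also have "\<dots> \<le> Q ^ N + Q ^ (N - 1)"
      by (intro add_mono power_mono Q) auto
    finally show ?thesis unfolding QN a_def .
  qed
  have c3: "real (card (T3 N)) \<le> Q * a"
  proof -
    have "real (card (T3 N)) \<le> ?q ^ N"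
      using T3_card[of N] by (metis of_nat_le_iff of_nat_power)
    also have "\<dots> \<le> Q ^ N" by (intro power_mono Q) auto
    finally show ?thesis unfolding QN .
  qed
  have "real (card (TT N)) \<le> real (card (T3 N)) * real (card (T2 N)) * real (card (T1 N))"
    using TT_card[of N] by (metis of_nat_le_iff of_nat_mult)
  also have "\<dots> \<le> (Q * a) * (Q * a + a) * ((Q * a) * (Q * a) + (Q * a) * a + a * a)"
    by (intro mult_mono c1 c2 c3) (use Q0 a0 in auto)
  also have "\<dots> = a ^ 4 * Q * (Q + 1) * (Q * Q + Q + 1)" by (simp add: algebra_simps power_def)
  also have "\<dots> \<le> a ^ 4 * Q * (Q + 1) * ((Q + 1) * (Q + 1))"
    by (intro mult_left_mono) (use Q0 a0 in \<open>auto simp: algebra_simps\<close>)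
  also have "\<dots> = Q ^ (4 * N) * (1 + 1 / Q) ^ 3"
  proof -
    have "Q ^ (4 * N) = (Q * a) ^ 4" using QN by (simp add: power_mult mult.commute)
    then show ?thesis using Qp by (simp add: field_simps power_mult_distrib) (simp add: power_def algebra_simps)
  qed
  finally show ?thesis .
qed


lemma decomp_all:
  assumes Q: "real (card S) \<le> Q" "Q \<ge> 1"
  shows "\<exists>T. finite T \<and> real (card T) \<le> Q ^ (4 * N) * (1 + 1 / Q) ^ 3 \<and>
    (\<forall>k\<in>Kgrp v. \<exists>t\<in>T. \<exists>h\<in>Kgrp v. I (int N) (h$2$1) \<and> I (2 * int N) (h$3$1) \<and> I (int N) (h$3$2) \<and> k = h ** t)"
proof (cases "N = 0")
  case True
  have "(1::real) \<le> (1 + 1 / Q) ^ 3" using Q by (intro one_le_power) auto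
  moreover have "\<forall>k\<in>Kgrp v. \<exists>t\<in>{mat 1}. \<exists>h\<in>Kgrp v. I (int N) (h$2$1) \<and> I (2 * int N) (h$3$1) \<and> I (int N) (h$3$2) \<and> k = h ** t"
    using True Kgrp_integral unfolding integral_iff by auto
  ultimately show ?thesis using True by (intro exI[of _ "{mat 1}"]) auto
next
  case False
  then show ?thesis using decomp[of N] TT_fin[of N] TT_card_real[of N Q] Q by (intro exI[of _ "TT N"]) auto
qed

end

context dvr
begin

lemma lam_nth [simp]:
  "lam_mat w a b c $ 1 $ 1 = w powi a" "lam_mat w a b c $ 1 $ 2 = 0" "lam_mat w a b c $ 1 $ 3 = 0"
  "lam_mat w a b c $ 2 $ 1 = 0" "lam_mat w a b c $ 2 $ 2 = w powi b" "lam_mat w a b c $ 2 $ 3 = 0"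
  "lam_mat w a b c $ 3 $ 1 = 0" "lam_mat w a b c $ 3 $ 2 = 0" "lam_mat w a b c $ 3 $ 3 = w powi c"
  by (simp_all add: lam_mat_def)

lemma wpi_cancel: "w powi a * w powi (- a) = 1"
  using wnz by (simp add: power_int_minus field_simps)

lemma lam_inv: "lam_mat w a b c ** lam_mat w (-a) (-b) (-c) = mat 1"
  "lam_mat w (-a) (-b) (-c) ** lam_mat w a b c = mat 1"
  unfolding mat3_eq mult_nth using wpi_cancel by (simp_all add: mult.commute)

lemma lam_entry: "I e x \<Longrightarrow> a + e - b \<ge> 0 \<Longrightarrow> I 0 (w powi a * x * w powi (-b))"
proof -
  assume x: "I e x" and ab: "a + e - b \<ge> 0"
  have "I (a + e + - b) (w powi a * x * w powi (-b))" by (intro I_mult I_powi x)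
  then show ?thesis using ab I_mono by fastforce
qed

lemma lam_conj:
  assumes h: "h \<in> Kgrp v" and h21: "I (int N) (h$2$1)" and h31: "I (2 * int N) (h$3$1)"
    and h32: "I (int N) (h$3$2)"
    and l: "l2 \<le> l1" "l3 \<le> l2" "l1 - l2 \<le> int N" "l2 - l3 \<le> int N"
  shows "lam_mat w l1 l2 l3 ** h ** lam_mat w (-l1) (-l2) (-l3) \<in> Kgrp v"
proof (rule Kgrp_of_det)
  have hi: "I 0 (h$1$1)" "I 0 (h$1$2)" "I 0 (h$1$3)" "I 0 (h$2$1)" "I 0 (h$2$2)" "I 0 (h$2$3)"
     "I 0 (h$3$1)" "I 0 (h$3$2)" "I 0 (h$3$3)"
    using Kgrp_integral[OF h] unfolding integral_iff by auto
  show "integral_mat v (lam_mat w l1 l2 l3 ** h ** lam_mat w (-l1) (-l2) (-l3))"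
    unfolding integral_iff mult_nth using l
    by (simp add: lam_entry[OF hi(1)] lam_entry[OF hi(2)] lam_entry[OF hi(3)]
       lam_entry[OF h21] lam_entry[OF hi(5)] lam_entry[OF hi(6)]
       lam_entry[OF h31] lam_entry[OF h32] lam_entry[OF hi(9)])
  have "det (lam_mat w l1 l2 l3 ** h ** lam_mat w (-l1) (-l2) (-l3)) = det h"
  proof -
    have "det (lam_mat w l1 l2 l3) * det (lam_mat w (-l1) (-l2) (-l3)) = 1"
      using lam_inv(1)[of l1 l2 l3] by (metis det_mul det_I)
    then show ?thesis by (simp add: det_mul algebra_simps)
  qed
  then show "\<not> I 1 (det (lam_mat w l1 l2 l3 ** h ** lam_mat w (-l1) (-l2) (-l3)))"
    using Kgrp_det[OF h] by simp
qed

end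

lemma Zgrp_mat: "z \<in> Zgrp \<longleftrightarrow> (\<exists>c. c \<noteq> 0 \<and> z = mat c)"
  unfolding Zgrp_def by auto

context dvr
begin

lemma ZK_Kn_sub:
  assumes z0: "z0 \<in> Zgrp" and k0: "k0 \<in> Kgrp v"
  shows "ZK_Kn v n (z0 ** k0 ** x) \<subseteq> ZK_Kn v n x"
proof
  fix y assume "y \<in> ZK_Kn v n (z0 ** k0 ** x)"
  then obtain z k k' where y: "y = z ** k ** (z0 ** k0 ** x) ** k'" and zk: "z \<in> Zgrp" "k \<in> Kgrp v" "k' \<in> Kn v n"
    unfolding ZK_Kn_def by blast
  obtain c where c: "c \<noteq> 0" "z = mat c" using zk(1) Zgrp_mat by blast
  obtain c0 where c0: "c0 \<noteq> 0" "z0 = mat c0" using z0 Zgrp_mat by blast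
  have "z ** k ** (z0 ** k0 ** x) = (z ** (k ** z0)) ** k0 ** x" by (simp add: matrix_mul_assoc)
  also have "\<dots> = (z ** (z0 ** k)) ** k0 ** x" using c0 mat_comm by metis
  also have "\<dots> = (z ** z0) ** (k ** k0) ** x" by (simp add: matrix_mul_assoc)
  finally have "y = mat (c * c0) ** (k ** k0) ** x ** k'" using y c c0 by (simp add: mat_mult_mat)
  moreover have "mat (c * c0) \<in> Zgrp" by (metis Zgrp_mat c(1) c0(1) mult_eq_0_iff)
  moreover have "k ** k0 \<in> Kgrp v" using Kgrp_mult zk(2) k0 by blast
  ultimately show "y \<in> ZK_Kn v n x" unfolding ZK_Kn_def using zk by blast
qed

lemma ZK_Kn_eq:
  assumes z: "z \<in> Zgrp" and k: "k \<in> Kgrp v"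
  shows "ZK_Kn v n (z ** k ** x) = ZK_Kn v n x"
proof
  show "ZK_Kn v n (z ** k ** x) \<subseteq> ZK_Kn v n x" by (rule ZK_Kn_sub[OF z k])
  obtain c where c: "c \<noteq> 0" "z = mat c" using z Zgrp_mat by blast
  obtain ki where ki: "ki \<in> Kgrp v" "ki ** k = mat 1" using Kgrp_inv[OF k] by blast
  have zi: "mat (inverse c) \<in> Zgrp" unfolding Zgrp_mat using c by (intro exI[of _ "inverse c"]) simp
  have "mat (inverse c) ** ki ** (z ** k ** x) = mat (inverse c) ** (ki ** z) ** k ** x"
    by (simp add: matrix_mul_assoc)
  also have "\<dots> = mat (inverse c) ** (z ** ki) ** k ** x" using c mat_comm by metis
  also have "\<dots> = (mat (inverse c) ** z) ** (ki ** k) ** x" by (simp add: matrix_mul_assoc)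
  also have "\<dots> = x" using c ki by (simp add: mat_mult_mat)
  finally have "ZK_Kn v n x = ZK_Kn v n (mat (inverse c) ** ki ** (z ** k ** x))" by simp
  also have "\<dots> \<subseteq> ZK_Kn v n (z ** k ** x)" by (rule ZK_Kn_sub[OF zi ki(1)])
  finally show "ZK_Kn v n x \<subseteq> ZK_Kn v n (z ** k ** x)" .
qed

lemma self_in_ZK_Kn: "g \<in> ZK_Kn v n g"
proof -
  have "mat 1 \<in> Zgrp" unfolding Zgrp_mat by (intro exI[of _ 1]) simp
  moreover have "mat 1 \<in> Kn v n" unfolding Kn_def using Kgrp_one by simp
  ultimately show ?thesis unfolding ZK_Kn_def using Kgrp_one
    by (metis (mono_tags, lifting) matrix_mul_lid matrix_mul_rid mem_Collect_eq)
qed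

end

theorem lemma9p7:
  fixes v :: "'a::field \<Rightarrow> int" and w :: 'a and n j :: nat and l1 l2 l3 :: int
  assumes "padic_field v"
    and "residue_char v \<noteq> 2" and "residue_char v \<noteq> 3"
    and "w \<noteq> 0" and "v w = 1"
    and "1 \<le> j" and "j \<le> n"
    and "l1 \<ge> l2" and "l2 \<ge> l3"
    and "max (l1 - l2) (l2 - l3) \<le> int n - int j"
  shows "finite (dcosets_in v n (ZK_K v (lam_mat w l1 l2 l3))) \<and>
         real (card (dcosets_in v n (ZK_K v (lam_mat w l1 l2 l3))))
           \<le> real (residue_card v) ^ (4 * n - 4 * j) * (1 + 1 / real (residue_card v)) ^ 3"
proof -
  note pf = assms(1)[unfolded padic_field_def]
  interpret dvr v w
  proof
    show "\<And>x y. x \<noteq> 0 \<Longrightarrow> y \<noteq> 0 \<Longrightarrow> v (x * y) = v x + v y" using pf by blast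
    show "\<And>x y. x \<noteq> 0 \<Longrightarrow> y \<noteq> 0 \<Longrightarrow> x + y \<noteq> 0 \<Longrightarrow> min (v x) (v y) \<le> v (x + y)" using pf by blast
  qed (use assms in auto)
  have finres: "finite (residue_field v)" using pf by blast
  obtain S where S: "finite S" "card S \<le> residue_card v" "\<forall>s\<in>S. I 0 s"
    "\<forall>x. I 0 x \<longrightarrow> (\<exists>s\<in>S. I 1 (x - s))"
    using residue_reps[OF finres] by blast
  interpret dvr_reps v w S using S by unfold_locales auto
  define Q where "Q = real (residue_card v)"
  have Q1: "Q \<ge> 1"
  proof -
    obtain s where "s \<in> S" using S(4) I_0 by blast
    then have "card S \<ge> 1" using S(1) by (metis One_nat_def Suc_leI card_gt_0_iff empty_iff)
    then show ?thesis unfolding Q_def using S(2) by linarith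
  qed
  have QS: "real (card S) \<le> Q" unfolding Q_def using S(2) by simp
  define N where "N = n - j"
  have NN: "int N = int n - int j" unfolding N_def using assms(7) by simp
  obtain T where T: "finite T" "real (card T) \<le> Q ^ (4 * N) * (1 + 1 / Q) ^ 3"
    "\<forall>k\<in>Kgrp v. \<exists>t\<in>T. \<exists>h\<in>Kgrp v. I (int N) (h$2$1) \<and> I (2 * int N) (h$3$1) \<and> I (int N) (h$3$2) \<and> k = h ** t"
    using decomp_all[OF QS Q1, of N] by blast
  define L where "L = lam_mat w l1 l2 l3"
  define L' where "L' = lam_mat w (-l1) (-l2) (-l3)"
  have ls: "l1 - l2 \<le> int N" "l2 - l3 \<le> int N" using assms(10) NN by auto
  have sub: "dcosets_in v n (ZK_K v L) \<subseteq> (\<lambda>t. ZK_Kn v n (L ** t)) ` T"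
  proof
    fix D assume "D \<in> dcosets_in v n (ZK_K v L)"
    then obtain g where D: "D = ZK_Kn v n g" "D \<subseteq> ZK_K v L" unfolding dcosets_in_def by blast
    have "g \<in> ZK_K v L" using D self_in_ZK_Kn by blast
    then obtain z k k' where g: "g = z ** k ** L ** k'" "z \<in> Zgrp" "k \<in> Kgrp v" "k' \<in> Kgrp v"
      unfolding ZK_K_def by blast
    obtain t h where th: "t \<in> T" "h \<in> Kgrp v" "I (int N) (h$2$1)" "I (2 * int N) (h$3$1)" "I (int N) (h$3$2)" "k' = h ** t"
      using T(3) g(4) by blast
    define g1 where "g1 = L ** h ** L'"
    have g1K: "g1 \<in> Kgrp v" unfolding g1_def L_def L'_def
      by (rule lam_conj[OF th(2) th(3) th(4) th(5)]) (use assms(8,9) ls in auto)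
    have "g1 ** L = L ** h" unfolding g1_def L_def L'_def
      by (metis lam_inv(2) matrix_mul_assoc matrix_mul_rid)
    then have "g = z ** (k ** g1) ** (L ** t)" using g(1) th(6) by (metis matrix_mul_assoc)
    then have "D = ZK_Kn v n (L ** t)" using D(1) ZK_Kn_eq[OF g(2) Kgrp_mult[OF g(3) g1K]] by simp
    then show "D \<in> (\<lambda>t. ZK_Kn v n (L ** t)) ` T" using th(1) by blast
  qed
  have fin: "finite (dcosets_in v n (ZK_K v L))" using finite_subset[OF sub] T(1) by blast
  have "card (dcosets_in v n (ZK_K v L)) \<le> card ((\<lambda>t. ZK_Kn v n (L ** t)) ` T)"
    using card_mono[OF _ sub] T(1) by blast
  also have "\<dots> \<le> card T" using card_image_le[OF T(1)] .
  finally have "real (card (dcosets_in v n (ZK_K v L))) \<le> Q ^ (4 * N) * (1 + 1 / Q) ^ 3"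
    using T(2) by linarith
  moreover have "4 * N = 4 * n - 4 * j" unfolding N_def by simp
  ultimately show ?thesis using fin unfolding L_def Q_def by simp
qed

end
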